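(* Let $0<T\le\infty$ and let $\varphi:[0,1]\times[0,T)\to\mathbb{R}$ be a smooth solution of $$\begin{cases}\varphi_t+r\varphi_r=\varphi_{rr}+\frac{\varphi_r}{r}-\frac{\sin(2\varphi)}{2r^2}, & 0<r<1,\\ \varphi(r,0)=\varphi_0(r), & 0<r<1,\\ \varphi(0,t)=0,\ \varphi(1,t)=\varphi_0(1), & t>0,\end{cases}$$ where $\varphi_0(0)=0$ and $-\pi\le\varphi_0(r)\le\pi$ for all $r\in[0,1]$. Then $-\pi<\varphi(r,t)<\pi$ for all $r\in(0,1)$ and $t\in(0,T)$. *)

theory Defs
  imports "HOL-Analysis.Analysis" "HOL-Library.Extended_Real"
begin

fun Ck_on :: "nat \<Rightarrow> (real \<times> real) set \<Rightarrow> (real \<times> real \<Rightarrow> real) \<Rightarrow> bool" where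
  "Ck_on 0 U f = continuous_on U f"
| "Ck_on (Suc k) U f =
     (\<exists>fx fy. (\<forall>p\<in>U. (f has_derivative (\<lambda>h. fst h * fx p + snd h * fy p)) (at p))
             \<and> Ck_on k U fx \<and> Ck_on k U fy)"

definition smooth_open_on :: "(real \<times> real) set \<Rightarrow> (real \<times> real \<Rightarrow> real) \<Rightarrow> bool" where
  "smooth_open_on U f \<longleftrightarrow> open U \<and> (\<forall>k. Ck_on k U f)"

text \<open>Smoothness on an arbitrary (e.g. non-open) set D: the restriction to D of a
  smooth function defined on an open neighbourhood of D.\<close>
definition smooth_on2 :: "(real \<times> real) set \<Rightarrow> (real \<Rightarrow> real \<Rightarrow> real) \<Rightarrow> bool" where
  "smooth_on2 D \<phi> \<longleftrightarrow> (\<exists>U g. D \<subseteq> U \<and> smooth_open_on U g \<and> (\<forall>p\<in>D. g p = \<phi> (fst p) (snd p)))"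

end

theory Submission
  imports Defs
begin


lemma minp:
  fixes y :: "real \<Rightarrow> real \<Rightarrow> real"
  assumes ab: "\<alpha> < \<beta>" and t1: "0 < t1"
    and cont: "continuous_on ({\<alpha>..\<beta>}\<times>{0..t1}) (\<lambda>p. y (fst p) (snd p))"
    and b0: "\<And>r. \<alpha> \<le> r \<Longrightarrow> r \<le> \<beta> \<Longrightarrow> 0 \<le> y r 0"
    and bl: "\<And>t. 0 \<le> t \<Longrightarrow> t \<le> t1 \<Longrightarrow> 0 \<le> y \<alpha> t"
    and br: "\<And>t. 0 \<le> t \<Longrightarrow> t \<le> t1 \<Longrightarrow> 0 \<le> y \<beta> t"
    and int: "\<And>r t. \<alpha> < r \<Longrightarrow> r < \<beta> \<Longrightarrow> 0 < t \<Longrightarrow> t \<le> t1 \<Longrightarrow> y r t < 0 \<Longrightarrow>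
      \<exists>yr yrr yt bb. (\<forall>\<rho>. \<alpha> < \<rho> \<and> \<rho> < \<beta> \<longrightarrow> ((\<lambda>x. y x t) has_real_derivative yr \<rho>) (at \<rho>))
        \<and> (yr has_real_derivative yrr) (at r) \<and> ((\<lambda>s. y r s) has_real_derivative yt) (at t)
        \<and> yrr + bb * yr r < yt"
  shows "\<alpha> \<le> r \<Longrightarrow> r \<le> \<beta> \<Longrightarrow> 0 \<le> t \<Longrightarrow> t \<le> t1 \<Longrightarrow> 0 \<le> y r t"
proof -
  have "compact ({\<alpha>..\<beta>}\<times>{0..t1})" by (intro compact_Times compact_Icc)
  moreover have "{\<alpha>..\<beta>}\<times>{0..t1} \<noteq> {}" using ab t1 by auto
  ultimately obtain p where pS: "p \<in> {\<alpha>..\<beta>}\<times>{0..t1}"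
    and pmin: "\<And>q. q \<in> {\<alpha>..\<beta>}\<times>{0..t1} \<Longrightarrow> y (fst p) (snd p) \<le> y (fst q) (snd q)"
    using continuous_attains_inf[OF _ _ cont] by blast
  obtain r0 t0 where p: "p = (r0, t0)" by (cases p)
  have min: "\<And>r t. \<alpha> \<le> r \<Longrightarrow> r \<le> \<beta> \<Longrightarrow> 0 \<le> t \<Longrightarrow> t \<le> t1 \<Longrightarrow> y r0 t0 \<le> y r t"
    using pmin p by fastforce
  have r0: "\<alpha> \<le> r0" "r0 \<le> \<beta>" and t0: "0 \<le> t0" "t0 \<le> t1" using pS p by auto
  have "0 \<le> y r0 t0"
  proof (rule ccontr)
    assume neg: "\<not> 0 \<le> y r0 t0"
    have "r0 \<noteq> \<alpha>" using bl[OF t0] neg by auto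
    have "r0 \<noteq> \<beta>" using br[OF t0] neg by auto
    have "t0 \<noteq> 0" using b0[OF r0] neg by auto
    have ri: "\<alpha> < r0" "r0 < \<beta>" using r0 \<open>r0 \<noteq> \<alpha>\<close> \<open>r0 \<noteq> \<beta>\<close> by auto
    have ti: "0 < t0" using t0 \<open>t0 \<noteq> 0\<close> by auto
    obtain yr yrr yt bb where
      d1: "\<And>\<rho>. \<alpha> < \<rho> \<Longrightarrow> \<rho> < \<beta> \<Longrightarrow> ((\<lambda>x. y x t0) has_real_derivative yr \<rho>) (at \<rho>)"
      and d2: "(yr has_real_derivative yrr) (at r0)"
      and d3: "((\<lambda>s. y r0 s) has_real_derivative yt) (at t0)"
      and ineq: "yrr + bb * yr r0 < yt"
      using int[OF ri ti t0(2)] neg by force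
    define d where "d = min (r0 - \<alpha>) (\<beta> - r0)"
    have dpos: "0 < d" using ri by (simp add: d_def)
    have yr0: "yr r0 = 0"
    proof (rule DERIV_local_min[OF d1[OF ri] dpos], intro allI impI)
      fix x assume "\<bar>r0 - x\<bar> < d"
      then show "y r0 t0 \<le> y x t0" using min[of x t0] t0 by (auto simp: d_def abs_if split: if_splits)
    qed
    have yrr: "0 \<le> yrr"
    proof (rule ccontr)
      assume "\<not> 0 \<le> yrr"
      then obtain e where e: "e > 0" and he: "\<And>h. h > 0 \<Longrightarrow> h < e \<Longrightarrow> yr r0 < yr (r0 - h)"
        using DERIV_neg_dec_left[OF d2] by force
      define h where "h = min e d / 2"
      have h: "h > 0" "h < e" "h < d" using e dpos by (auto simp: h_def)
      have "\<exists>z. r0 - h < z \<and> z < r0 \<and> y r0 t0 - y (r0 - h) t0 = (r0 - (r0 - h)) * yr z"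
        by (rule MVT2) (use h d_def in \<open>auto intro!: d1\<close>)
      then obtain z where z: "r0 - h < z" "z < r0" "y r0 t0 - y (r0 - h) t0 = h * yr z" by auto
      have "yr z > 0" using he[of "r0 - z"] z h yr0 by auto
      then have "h * yr z > 0" using h(1) by simp
      then have "y (r0 - h) t0 < y r0 t0" using z(3) by linarith
      moreover have "y r0 t0 \<le> y (r0 - h) t0" using min[of "r0 - h" t0] t0 h by (auto simp: d_def)
      ultimately show False by simp
    qed
    have yt: "yt \<le> 0"
    proof (rule ccontr)
      assume "\<not> yt \<le> 0"
      then obtain e where e: "e > 0" and he: "\<And>h. h > 0 \<Longrightarrow> h < e \<Longrightarrow> y r0 (t0 - h) < y r0 t0"
        using DERIV_pos_inc_left[OF d3] by force
      define h where "h = min e t0 / 2"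
      have h: "h > 0" "h < e" "h < t0" using e ti by (auto simp: h_def)
      have "y r0 t0 \<le> y r0 (t0 - h)" using min[of r0 "t0 - h"] r0 t0 h by auto
      with he[OF h(1,2)] show False by simp
    qed
    show False using ineq yr0 yrr yt by simp
  qed
  then show "\<alpha> \<le> r \<Longrightarrow> r \<le> \<beta> \<Longrightarrow> 0 \<le> t \<Longrightarrow> t \<le> t1 \<Longrightarrow> 0 \<le> y r t"
    using min by (meson order_trans)
qed

lemma partial_fst:
  assumes "(g has_derivative (\<lambda>h. fst h * a + snd h * b)) (at (x,y))"
  shows "((\<lambda>s. g (s,y)) has_real_derivative a) (at x)"
proof -
  have "((\<lambda>s. (s,y)) has_derivative (\<lambda>h. (h,0))) (at x)"
    by (auto intro!: derivative_eq_intros)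
  from has_derivative_compose[OF this assms[simplified]]
  have "((\<lambda>s. g (s,y)) has_derivative (\<lambda>h. fst (h,0::real) * a + snd (h,0::real) * b)) (at x)" by simp
  thus ?thesis unfolding has_field_derivative_def
    by (rule has_derivative_eq_rhs) (auto simp: mult.commute fun_eq_iff)
qed
lemma partial_snd:
  assumes "(g has_derivative (\<lambda>h. fst h * a + snd h * b)) (at (x,y))"
  shows "((\<lambda>s. g (x,s)) has_real_derivative b) (at y)"
proof -
  have "((\<lambda>s. (x,s)) has_derivative (\<lambda>h. (0,h))) (at y)"
    by (auto intro!: derivative_eq_intros)
  from has_derivative_compose[OF this assms[simplified]]
  have "((\<lambda>s. g (x,s)) has_derivative (\<lambda>h. fst (0::real,h) * a + snd (0::real,h) * b)) (at y)" by simp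
  thus ?thesis unfolding has_field_derivative_def
    by (rule has_derivative_eq_rhs) (auto simp: mult.commute fun_eq_iff)
qed


lemma arith1:
  fixes z r \<alpha> K :: real
  assumes "z < 0" "0 < \<alpha>" "\<alpha> \<le> r" "1/\<alpha>^2 < K"
  shows "0 < - K * z - sin (2*z) / (2*r^2)"
proof -
  have "\<bar>sin (2*z)\<bar> \<le> \<bar>2*z\<bar>" by (rule abs_sin_x_le_abs_x)
  hence s: "- sin (2*z) \<ge> 2*z" using assms by linarith
  have r2: "r^2 > 0" using assms by simp
  have "2*z / (2*r^2) \<le> (- sin (2*z)) / (2*r^2)"
    by (rule divide_right_mono[OF s]) (use r2 in simp)
  also have "2*z/(2*r^2) = z * (1/r^2)" by simp
  finally have a: "- sin (2*z) / (2*r^2) \<ge> z * (1/r^2)" .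
  have "1/r^2 \<le> 1/\<alpha>^2" using assms by (simp add: frac_le power_mono)
  hence "1/r^2 < K" using assms by linarith
  hence "z * K < z * (1/r^2)" using assms(1) by (rule mult_strict_left_mono_neg)
  thus ?thesis using a by (simp add: algebra_simps)
qed

lemma arith2:
  fixes u W M r L :: real
  assumes "0 \<le> u" "u < W" "0 < M" "0 < r" "1/r^2 \<le> M" "L \<le> - M * W"
  shows "L < - sin (2*u) / (2*r^2)"
proof -
  have s: "sin (2*u) \<le> 2*u" using assms by (intro sin_x_le_x) simp
  have r2: "r^2 > 0" using assms by simp
  have "sin (2*u) / (2*r^2) \<le> 2*u / (2*r^2)"
    by (rule divide_right_mono[OF s]) (use r2 in simp)
  also have "2*u/(2*r^2) = u * (1/r^2)" by simp
  also have "\<dots> \<le> u * M" using assms by (intro mult_left_mono) auto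
  also have "\<dots> < W * M" using assms by (intro mult_strict_right_mono) auto
  finally show ?thesis using assms by (simp add: algebra_simps)
qed


lemma core:
  fixes T :: ereal and G Gr Grr Gt :: "real \<Rightarrow> real \<Rightarrow> real"
  assumes cont: "continuous_on ({0..1} \<times> {t. 0 \<le> t \<and> ereal t < T}) (\<lambda>p. G (fst p) (snd p))"
  and dr: "\<And>r t. 0<r \<Longrightarrow> r<1 \<Longrightarrow> 0<t \<Longrightarrow> ereal t < T \<Longrightarrow> ((\<lambda>x. G x t) has_real_derivative Gr r t) (at r)"
  and drr: "\<And>r t. 0<r \<Longrightarrow> r<1 \<Longrightarrow> 0<t \<Longrightarrow> ereal t < T \<Longrightarrow> ((\<lambda>x. Gr x t) has_real_derivative Grr r t) (at r)"
  and dt: "\<And>r t. 0<r \<Longrightarrow> r<1 \<Longrightarrow> 0<t \<Longrightarrow> ereal t < T \<Longrightarrow> ((\<lambda>s. G r s) has_real_derivative Gt r t) (at t)"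
  and pde: "\<And>r t. 0<r \<Longrightarrow> r<1 \<Longrightarrow> 0<t \<Longrightarrow> ereal t < T \<Longrightarrow>
      Gt r t + r * Gr r t = Grr r t + Gr r t / r - sin (2 * G r t) / (2 * r^2)"
  and b0: "\<And>t. 0<t \<Longrightarrow> ereal t < T \<Longrightarrow> G 0 t = 0"
  and b1: "\<And>t. 0<t \<Longrightarrow> ereal t < T \<Longrightarrow> G 1 t \<le> pi"
  and i0: "\<And>r. 0<r \<Longrightarrow> r<1 \<Longrightarrow> G r 0 \<le> pi"
  and r0: "0 < r0" "r0 < 1" and t0: "0 < t0" "ereal t0 < T"
  shows "G r0 t0 < pi"
proof -
  define K where "K = {0..1::real} \<times> {0..t0}"
  have KD: "K \<subseteq> {0..1} \<times> {t. 0 \<le> t \<and> ereal t < T}"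
    using t0 by (auto simp: K_def) (meson ereal_less_eq(3) le_less_trans)
  have tT: "\<And>t. t \<le> t0 \<Longrightarrow> ereal t < T"
    using t0 by (meson ereal_less_eq(3) le_less_trans)
  have contK: "continuous_on K (\<lambda>p. G (fst p) (snd p))"
    using continuous_on_subset[OF cont KD] .
  have G10: "G 1 0 \<le> pi"
  proof -
    have c: "continuous_on {0..t0} (\<lambda>t. G 1 t)"
    proof -
      have "continuous_on {0..t0} (\<lambda>t. (1::real, t))" by (intro continuous_intros)
      moreover have "(\<lambda>t. (1::real, t)) ` {0..t0} \<subseteq> K" by (auto simp: K_def)
      ultimately show ?thesis using continuous_on_compose2[OF contK] by force
    qed
    show ?thesis
      by (rule continuous_le_on_closure[where S="{0<..t0}"])
         (use c t0 b1 tT in auto)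
  qed
  have "uniformly_continuous_on K (\<lambda>p. G (fst p) (snd p))"
    by (rule compact_uniformly_continuous[OF contK]) (simp add: K_def compact_Times)
  then obtain d where d: "d > 0" and
    hd: "\<And>x x'. x \<in> K \<Longrightarrow> x' \<in> K \<Longrightarrow> dist x' x < d \<Longrightarrow>
         dist (G (fst x') (snd x')) (G (fst x) (snd x)) < pi/2"
    unfolding uniformly_continuous_on_def by (metis pi_half_gt_zero)
  define \<alpha> where "\<alpha> = min (d/3) (r0/2)"
  have \<alpha>: "0 < \<alpha>" "\<alpha> < r0" "\<alpha> \<le> d/3" using d r0 by (auto simp: \<alpha>_def)
  have G\<alpha>: "G \<alpha> t \<le> pi/2" if t: "0 \<le> t" "t \<le> t0" for t
  proof (cases "t = 0")
    case False
    have "dist (G \<alpha> t) (G 0 t) < pi/2"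
      using hd[of "(0,t)" "(\<alpha>,t)"] \<alpha> r0 t d by (auto simp: K_def dist_Pair_Pair dist_real_def)
    thus ?thesis using b0[of t] False t tT by (auto simp: dist_real_def)
  next
    case True
    define s where "s = min t0 (d/3)"
    have s: "0 < s" "s \<le> t0" "s \<le> d/3" using t0 d by (auto simp: s_def)
    have "\<alpha>^2 + s^2 < d^2"
    proof -
      have "\<alpha>^2 \<le> (d/3)^2" using \<alpha> by (intro power_mono) auto
      moreover have "s^2 \<le> (d/3)^2" using s by (intro power_mono) auto
      ultimately have "\<alpha>^2 + s^2 \<le> 2*(d^2/9)" by (simp add: power_divide)
      moreover have "d^2 > 0" using d by simp
      ultimately show ?thesis by linarith
    qed
    hence "sqrt (\<alpha>^2 + s^2) < d" using d by (metis real_sqrt_less_mono real_sqrt_abs abs_of_pos power2_eq_square)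
    hence "dist (G \<alpha> 0) (G 0 s) < pi/2"
      using hd[of "(0,s)" "(\<alpha>,0)"] \<alpha> r0 s d by (auto simp: K_def dist_Pair_Pair dist_real_def)
    thus ?thesis using b0[of s] True s tT by (auto simp: dist_real_def)
  qed
  have gt_eq: "Gt r t = Grr r t + (1/r - r) * Gr r t - sin (2 * G r t) / (2 * r^2)"
    if "0<r" "r<1" "0<t" "ereal t < T" for r t
    using pde[OF that] that by (simp add: field_simps)
  define Kc where "Kc = 1/\<alpha>^2 + 1"
  have Kc: "1/\<alpha>^2 < Kc" by (simp add: Kc_def)
  have weak0: "0 \<le> exp(-Kc*t)*(pi - G r t)" if "\<alpha> \<le> r" "r \<le> 1" "0 \<le> t" "t \<le> t0" for r t
  proof (rule minp[of \<alpha> 1 t0 "\<lambda>r t. exp(-Kc*t)*(pi - G r t)", OF _ t0(1) _ _ _ _ _ that])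
    show "\<alpha> < 1" using \<alpha> r0 by simp
    have "{\<alpha>..1} \<times> {0..t0} \<subseteq> K" using \<alpha> by (auto simp: K_def)
    from continuous_on_subset[OF contK this]
    show "continuous_on ({\<alpha>..1} \<times> {0..t0}) (\<lambda>p. exp (- Kc * snd p) * (pi - G (fst p) (snd p)))"
      by (auto intro!: continuous_intros)
    show "0 \<le> exp (- Kc * 0) * (pi - G r 0)" if "\<alpha> \<le> r" "r \<le> 1" for r
      using that i0[of r] G10 \<alpha> by (cases "r = 1") auto
    show "0 \<le> exp (- Kc * t) * (pi - G \<alpha> t)" if "0 \<le> t" "t \<le> t0" for t
    proof -
      have "G \<alpha> t \<le> pi" using G\<alpha>[OF that] pi_gt_zero by linarith
      thus ?thesis by simp
    qed
    show "0 \<le> exp (- Kc * t) * (pi - G 1 t)" if "0 \<le> t" "t \<le> t0" for t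
      using that G10 b1[of t] tT[of t] by (cases "t = 0") auto
    fix r t assume r: "\<alpha> < r" "r < 1" and t: "0 < t" "t \<le> t0"
      and neg: "exp (- Kc * t) * (pi - G r t) < 0"
    have tt: "ereal t < T" using tT t by simp
    have rpos: "0 < r" using r \<alpha> by simp
    define e where "e = exp (- Kc * t)"
    have e: "e > 0" by (simp add: e_def)
    define z where "z = pi - G r t"
    have z: "z < 0" using neg e by (simp add: e_def z_def mult_less_0_iff)
    have H1: "((\<lambda>x. exp (- Kc * t) * (pi - G x t)) has_real_derivative e * (- Gr \<rho> t)) (at \<rho>)"
      if "\<alpha> < \<rho> \<and> \<rho> < 1" for \<rho>
      using dr[of \<rho> t] that \<alpha> t tt unfolding e_def
      by (auto intro!: derivative_eq_intros)
    have H2: "((\<lambda>\<rho>. e * (- Gr \<rho> t)) has_real_derivative e * (- Grr r t)) (at r)"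
      using drr[OF rpos r(2) t(1) tt] by (auto intro!: derivative_eq_intros)
    have H3: "((\<lambda>s. exp (- Kc * s) * (pi - G r s)) has_real_derivative
         (- Kc * e * z + e * (- Gt r t))) (at t)"
      using dt[OF rpos r(2) t(1) tt] unfolding e_def z_def
      by (auto intro!: derivative_eq_intros simp: algebra_simps)
    have key: "0 < - Kc * z - sin (2*z) / (2*r^2)"
      by (rule arith1[OF z \<alpha>(1) _ Kc]) (use r in simp)
    have sinG: "sin (2 * G r t) = - sin (2*z)"
    proof -
      have "2 * G r t = 2*pi - 2*z" by (simp add: z_def)
      thus ?thesis by (simp add: sin_diff)
    qed
    have "(- Kc * e * z + e * (- Gt r t)) - (e * (- Grr r t) + (1/r - r) * (e * (- Gr r t)))
          = e * (- Kc * z - sin (2*z) / (2*r^2))"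
    proof -
      have P: "Gt r t = Grr r t + (1/r - r) * Gr r t + sin (2*z) / (2*r^2)"
        using gt_eq[OF rpos r(2) t(1) tt] sinG by simp
      show ?thesis unfolding P by (simp add: algebra_simps)
    qed
    also have "\<dots> > 0" using e key by simp
    finally have ineq: "e * (- Grr r t) + (1/r - r) * (e * (- Gr r t)) < - Kc * e * z + e * (- Gt r t)" by simp
    show "\<exists>yr yrr yt bb.
          (\<forall>\<rho>. \<alpha> < \<rho> \<and> \<rho> < 1 \<longrightarrow> ((\<lambda>x. exp (- Kc * t) * (pi - G x t)) has_real_derivative yr \<rho>) (at \<rho>)) \<and>
          (yr has_real_derivative yrr) (at r) \<and>
          ((\<lambda>s. exp (- Kc * s) * (pi - G r s)) has_real_derivative yt) (at t) \<and> yrr + bb * yr r < yt"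
      apply (rule exI[of _ "\<lambda>\<rho>. e * (- Gr \<rho> t)"], rule exI[of _ "e * (- Grr r t)"],
        rule exI[of _ "- Kc * e * z + e * (- Gt r t)"], rule exI[of _ "1/r - r"])
      using H1 H2 H3 ineq by auto
  qed
  have weak: "G r t \<le> pi" if "\<alpha> \<le> r" "r \<le> 1" "0 \<le> t" "t \<le> t0" for r t
    using weak0[OF that] by (simp add: zero_le_mult_iff)
  define M where "M = 1/\<alpha>^2"
  have M: "0 < M" using \<alpha> by (simp add: M_def)
  define rs where "rs = (r0 + 1)/2"
  have rs: "r0 < rs" "rs < 1" "\<alpha> < rs" using r0 \<alpha> by (auto simp: rs_def)
  define c where "c = (rs - \<alpha>)/t0"
  have c: "c > 0" using rs t0 by (simp add: c_def)
  define lam where "lam = 1/\<alpha> + M + c + 1"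
  define mu where "mu = lam*lam - lam/\<alpha> - M"
  have ia: "1/\<alpha> > 1" using \<alpha> r0 by simp
  have lam: "lam > 1" using ia M c by (simp add: lam_def)
  have mu_eq: "mu = lam*c + lam*(M+1) - M"
  proof -
    have l: "lam - 1/\<alpha> = M + c + 1" by (simp add: lam_def)
    have "mu = lam*(lam - 1/\<alpha>) - M" by (simp add: mu_def algebra_simps)
    also have "\<dots> = lam*c + lam*(M+1) - M" unfolding l by (simp add: algebra_simps)
    finally show ?thesis .
  qed
  have "lam*(M+1) \<ge> 1*(M+1)" using lam M by (intro mult_right_mono) auto
  hence mu_gt: "mu > lam*c" using mu_eq by simp
  have mu: "mu \<ge> 0" using mu_gt lam c by (smt (verit) mult_pos_pos)
  have mut0: "mu*t0 \<ge> lam*(rs - \<alpha>)"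
  proof -
    have "mu*t0 \<ge> (lam*c)*t0" using mu_gt t0 by (intro mult_right_mono) auto
    also have "(lam*c)*t0 = lam*(rs - \<alpha>)" using t0 by (simp add: c_def)
    finally show ?thesis .
  qed
  define C0 where "C0 = exp (-lam*rs + mu*t0)"
  define A where "A = (pi/2) * exp (lam*\<alpha> - mu*t0)"
  have A: "A > 0" by (simp add: A_def)
  have C0: "C0 > 0" by (simp add: C0_def)
  define w where "w = (\<lambda>r t. A * (exp (-lam*r + mu*t) - C0))"
  have main0: "0 \<le> pi - G r t - w r t" if "\<alpha> \<le> r" "r \<le> 1" "0 \<le> t" "t \<le> t0" for r t
  proof (rule minp[of \<alpha> 1 t0 "\<lambda>r t. pi - G r t - w r t", OF _ t0(1) _ _ _ _ _ that])
    show "\<alpha> < 1" using \<alpha> r0 by simp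
    have "{\<alpha>..1} \<times> {0..t0} \<subseteq> K" using \<alpha> by (auto simp: K_def)
    from continuous_on_subset[OF contK this]
    show "continuous_on ({\<alpha>..1} \<times> {0..t0}) (\<lambda>p. pi - G (fst p) (snd p) - w (fst p) (snd p))"
      unfolding w_def by (auto intro!: continuous_intros)
    show "0 \<le> pi - G r 0 - w r 0" if "\<alpha> \<le> r" "r \<le> 1" for r
    proof -
      have "lam*\<alpha> \<le> lam*r" using that lam by (intro mult_left_mono) auto
      hence "-lam*r + mu*0 \<le> -lam*rs + mu*t0" using mut0 by (simp add: algebra_simps)
      hence "exp (-lam*r + mu*0) \<le> C0" unfolding C0_def by simp
      hence "w r 0 \<le> 0" using A unfolding w_def by (intro mult_nonneg_nonpos) auto
      thus ?thesis using weak[of r 0] that t0 by simp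
    qed
    show "0 \<le> pi - G \<alpha> t - w \<alpha> t" if "0 \<le> t" "t \<le> t0" for t
    proof -
      have "-lam*\<alpha> + mu*t \<le> -lam*\<alpha> + mu*t0" using that mu by (simp add: mult_left_mono)
      hence "exp (-lam*\<alpha> + mu*t) \<le> exp (-lam*\<alpha> + mu*t0)" by simp
      hence "A * exp (-lam*\<alpha> + mu*t) \<le> A * exp (-lam*\<alpha> + mu*t0)" using A by simp
      also have "A * exp (-lam*\<alpha> + mu*t0) = pi/2"
        unfolding A_def by (simp add: mult.assoc exp_add[symmetric])
      finally have "A * exp (-lam*\<alpha> + mu*t) \<le> pi/2" .
      moreover have "A * C0 > 0" using A C0 by simp
      ultimately have "w \<alpha> t \<le> pi/2" unfolding w_def by (simp add: right_diff_distrib)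
      thus ?thesis using G\<alpha>[OF that] by simp
    qed
    show "0 \<le> pi - G 1 t - w 1 t" if "0 \<le> t" "t \<le> t0" for t
    proof -
      have "-lam*1 + mu*t \<le> -lam*rs + mu*t0"
      proof -
        have "mu*t \<le> mu*t0" using that mu by (simp add: mult_left_mono)
        moreover have "lam*rs \<le> lam*1" using rs lam by (intro mult_left_mono) auto
        ultimately show ?thesis by simp
      qed
      hence "exp (-lam*1 + mu*t) \<le> C0" unfolding C0_def by simp
      hence "w 1 t \<le> 0" using A unfolding w_def by (intro mult_nonneg_nonpos) auto
      thus ?thesis using weak[of 1 t] that \<alpha> r0 by simp
    qed
    fix r t assume r: "\<alpha> < r" "r < 1" and t: "0 < t" "t \<le> t0"
      and neg: "pi - G r t - w r t < 0"
    have tt: "ereal t < T" using tT t by simp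
    have rpos: "0 < r" using r \<alpha> by simp
    define E where "E = exp (-lam*r + mu*t)"
    define u where "u = pi - G r t"
    have u: "0 \<le> u" using weak[of r t] r t by (simp add: u_def)
    have AC: "A * C0 > 0" using A C0 by simp
    have uW: "u < A * E" using neg AC unfolding u_def w_def E_def by (simp add: right_diff_distrib)
    have H1: "((\<lambda>x. pi - G x t - w x t) has_real_derivative
         (- Gr \<rho> t + A*lam*exp (-lam*\<rho> + mu*t))) (at \<rho>)"
      if "\<alpha> < \<rho> \<and> \<rho> < 1" for \<rho>
      using dr[of \<rho> t] that \<alpha> t tt unfolding w_def
      by (auto intro!: derivative_eq_intros simp: algebra_simps)
    have H2: "((\<lambda>\<rho>. - Gr \<rho> t + A*lam*exp (-lam*\<rho> + mu*t)) has_real_derivative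
         (- Grr r t - A*lam*lam*E)) (at r)"
      using drr[OF rpos r(2) t(1) tt] unfolding E_def
      by (auto intro!: derivative_eq_intros simp: algebra_simps)
    have H3: "((\<lambda>s. pi - G r s - w r s) has_real_derivative (- Gt r t - A*mu*E)) (at t)"
      using dt[OF rpos r(2) t(1) tt] unfolding E_def w_def
      by (auto intro!: derivative_eq_intros simp: algebra_simps)
    have sinG: "sin (2 * G r t) = - sin (2*u)"
    proof -
      have "2 * G r t = 2*pi - 2*u" by (simp add: u_def)
      thus ?thesis by (simp add: sin_diff)
    qed
    have b: "1/r - r \<le> 1/\<alpha>"
    proof -
      have "1/r \<le> 1/\<alpha>" using r \<alpha> by (simp add: frac_le)
      thus ?thesis using rpos by simp
    qed
    have coef: "mu - lam*lam + (1/r - r)*lam \<le> - M"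
    proof -
      have "(1/r - r)*lam \<le> (1/\<alpha>)*lam" using b lam by (intro mult_right_mono) auto
      thus ?thesis by (simp add: mu_def)
    qed
    have E: "E > 0" by (simp add: E_def)
    have L: "A*E*(mu - lam*lam + (1/r - r)*lam) \<le> - M * (A*E)"
    proof -
      have "A*E*(mu - lam*lam + (1/r - r)*lam) \<le> A*E*(-M)"
        using coef A E by (intro mult_left_mono) auto
      thus ?thesis by (simp add: mult.commute)
    qed
    have "1/r^2 \<le> M" unfolding M_def using r \<alpha> by (simp add: frac_le power_mono)
    from arith2[OF u uW M rpos this L]
    have key: "A*E*(mu - lam*lam + (1/r - r)*lam) < - sin (2*u) / (2*r^2)" .
    have P: "Gt r t = Grr r t + (1/r - r) * Gr r t + sin (2*u) / (2*r^2)"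
      using gt_eq[OF rpos r(2) t(1) tt] sinG by simp
    have ineq: "(- Grr r t - A*lam*lam*E) + (1/r - r) * (- Gr r t + A*lam*exp (-lam*r + mu*t))
         < - Gt r t - A*mu*E"
      using key unfolding P E_def[symmetric] by (simp add: algebra_simps)
    show "\<exists>yr yrr yt bb.
          (\<forall>\<rho>. \<alpha> < \<rho> \<and> \<rho> < 1 \<longrightarrow> ((\<lambda>x. pi - G x t - w x t) has_real_derivative yr \<rho>) (at \<rho>)) \<and>
          (yr has_real_derivative yrr) (at r) \<and>
          ((\<lambda>s. pi - G r s - w r s) has_real_derivative yt) (at t) \<and> yrr + bb * yr r < yt"
      apply (rule exI[of _ "\<lambda>\<rho>. - Gr \<rho> t + A*lam*exp (-lam*\<rho> + mu*t)"],
        rule exI[of _ "- Grr r t - A*lam*lam*E"],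
        rule exI[of _ "- Gt r t - A*mu*E"], rule exI[of _ "1/r - r"])
      using H1 H2 H3 ineq by auto
  qed
  have "0 < w r0 t0"
  proof -
    have "-lam*rs < -lam*r0" using rs lam by simp
    hence "C0 < exp (-lam*r0 + mu*t0)" unfolding C0_def by simp
    thus ?thesis using A unfolding w_def by simp
  qed
  thus ?thesis using main0[of r0 t0] \<alpha> r0 t0 by simp
qed

theorem lemma4p1:
  fixes T :: ereal and \<phi> :: "real \<Rightarrow> real \<Rightarrow> real" and \<phi>0 :: "real \<Rightarrow> real"
  assumes T_pos: "0 < T"
    and smooth: "smooth_on2 ({0..1} \<times> {t. 0 \<le> t \<and> ereal t < T}) \<phi>"
    and pde: "\<And>r t. 0 < r \<Longrightarrow> r < 1 \<Longrightarrow> 0 < t \<Longrightarrow> ereal t < T \<Longrightarrow>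
       deriv (\<lambda>s. \<phi> r s) t + r * deriv (\<lambda>\<rho>. \<phi> \<rho> t) r
       = deriv (\<lambda>\<rho>. deriv (\<lambda>\<sigma>. \<phi> \<sigma> t) \<rho>) r + deriv (\<lambda>\<rho>. \<phi> \<rho> t) r / r
         - sin (2 * \<phi> r t) / (2 * r\<^sup>2)"
    and init: "\<And>r. 0 < r \<Longrightarrow> r < 1 \<Longrightarrow> \<phi> r 0 = \<phi>0 r"
    and bdry0: "\<And>t. 0 < t \<Longrightarrow> ereal t < T \<Longrightarrow> \<phi> 0 t = 0"
    and bdry1: "\<And>t. 0 < t \<Longrightarrow> ereal t < T \<Longrightarrow> \<phi> 1 t = \<phi>0 1"
    and phi0_0: "\<phi>0 0 = 0"
    and phi0_bd: "\<And>r. 0 \<le> r \<Longrightarrow> r \<le> 1 \<Longrightarrow> - pi \<le> \<phi>0 r \<and> \<phi>0 r \<le> pi"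
  shows "\<forall>r t. 0 < r \<and> r < 1 \<and> 0 < t \<and> ereal t < T \<longrightarrow> - pi < \<phi> r t \<and> \<phi> r t < pi"
proof -
  define D where "D = {0..1::real} \<times> {t. 0 \<le> t \<and> ereal t < T}"
  obtain U g where DU: "D \<subseteq> U" and sm: "smooth_open_on U g"
    and g\<phi>: "\<forall>p\<in>D. g p = \<phi> (fst p) (snd p)"
    using smooth unfolding smooth_on2_def D_def by blast
  have ck: "\<And>k. Ck_on k U g" using sm by (auto simp: smooth_open_on_def)
  have contg: "continuous_on U g" using ck[of 0] by simp
  obtain fx fy where dg: "\<forall>p\<in>U. (g has_derivative (\<lambda>h. fst h * fx p + snd h * fy p)) (at p)"
    and c1: "Ck_on (Suc 0) U fx"
    using ck[of "Suc (Suc 0)"] by auto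
  obtain fxx fxy where dfx: "\<forall>p\<in>U. (fx has_derivative (\<lambda>h. fst h * fxx p + snd h * fxy p)) (at p)"
    using c1 by auto
  have inU: "(r,t) \<in> U" if "0\<le>r" "r\<le>1" "0\<le>t" "ereal t < T" for r t
    using DU that by (auto simp: D_def)
  have phi_g: "\<phi> r t = g (r,t)" if "0\<le>r" "r\<le>1" "0\<le>t" "ereal t < T" for r t
    using g\<phi> that by (auto simp: D_def)
  have cont\<phi>: "continuous_on D (\<lambda>p. \<phi> (fst p) (snd p))"
    by (rule continuous_on_eq[OF continuous_on_subset[OF contg DU]]) (use g\<phi> in auto)
  have dr: "((\<lambda>x. \<phi> x t) has_real_derivative fx (r,t)) (at r)"
    if "0<r" "r<1" "0<t" "ereal t < T" for r t
  proof -
    have "((\<lambda>x. g (x,t)) has_real_derivative fx (r,t)) (at r)"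
      by (rule partial_fst) (use dg inU that in auto)
    then show ?thesis
      by (rule has_field_derivative_transform_within_open[where S="{0<..<1}"])
         (use that in \<open>auto simp: phi_g\<close>)
  qed
  have drr: "((\<lambda>x. fx (x,t)) has_real_derivative fxx (r,t)) (at r)"
    if "0<r" "r<1" "0<t" "ereal t < T" for r t
    by (rule partial_fst) (use dfx inU that in auto)
  have dt: "((\<lambda>s. \<phi> r s) has_real_derivative fy (r,t)) (at t)"
    if hh: "0<r" "r<1" "0<t" "ereal t < T" for r t
  proof -
    obtain t' where t': "t < t'" "ereal t' < T" using ereal_dense2[OF hh(4)] by auto
    have "((\<lambda>s. g (r,s)) has_real_derivative fy (r,t)) (at t)"
      by (rule partial_snd) (use dg inU hh in auto)
    then show ?thesis
    proof (rule has_field_derivative_transform_within_open[where S="{0<..<t'}"])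
      show "open {0<..<t'}" by simp
      show "t \<in> {0<..<t'}" using hh t' by simp
      fix s assume s: "s \<in> {0<..<t'}"
      have "ereal s < T" using s t' by (meson greaterThanLessThan_iff ereal_less_eq(3) le_less_trans less_imp_le)
      then show "g (r,s) = \<phi> r s" using s hh by (simp add: phi_g)
    qed
  qed
  have pde': "fy (r,t) + r * fx (r,t) = fxx (r,t) + fx (r,t) / r - sin (2 * \<phi> r t) / (2 * r^2)"
    if "0<r" "r<1" "0<t" "ereal t < T" for r t
  proof -
    have e1: "deriv (\<lambda>s. \<phi> r s) t = fy (r,t)" by (rule DERIV_imp_deriv[OF dt[OF that]])
    have e2: "deriv (\<lambda>\<rho>. \<phi> \<rho> t) r = fx (r,t)" by (rule DERIV_imp_deriv[OF dr[OF that]])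
    have "deriv (\<lambda>\<rho>. deriv (\<lambda>\<sigma>. \<phi> \<sigma> t) \<rho>) r = deriv (\<lambda>\<rho>. fx (\<rho>,t)) r"
    proof (rule deriv_cong_ev[OF _ refl])
      have "eventually (\<lambda>\<rho>. \<rho> \<in> {0<..<1}) (nhds r)"
        using that by (intro eventually_nhds_in_open) auto
      then show "\<forall>\<^sub>F \<rho> in nhds r. deriv (\<lambda>\<sigma>. \<phi> \<sigma> t) \<rho> = fx (\<rho>, t)"
        by eventually_elim (use that in \<open>auto intro!: DERIV_imp_deriv dr\<close>)
    qed
    also have "\<dots> = fxx (r,t)" by (rule DERIV_imp_deriv[OF drr[OF that]])
    finally have e3: "deriv (\<lambda>\<rho>. deriv (\<lambda>\<sigma>. \<phi> \<sigma> t) \<rho>) r = fxx (r,t)" .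
    show ?thesis using pde[OF that] e1 e2 e3 by simp
  qed
  show ?thesis
  proof (intro allI impI)
    fix r t :: real assume rt: "0 < r \<and> r < 1 \<and> 0 < t \<and> ereal t < T"
    have up: "\<phi> r t < pi"
    proof (rule core[of T \<phi> "\<lambda>r t. fx (r,t)" "\<lambda>r t. fxx (r,t)" "\<lambda>r t. fy (r,t)"])
      show "continuous_on ({0..1} \<times> {t. 0 \<le> t \<and> ereal t < T}) (\<lambda>p. \<phi> (fst p) (snd p))"
        using cont\<phi> by (simp add: D_def)
    qed (use rt dr drr dt pde' bdry0 bdry1 init phi0_bd in auto)
    have lo: "- \<phi> r t < pi"
    proof (rule core[of T "\<lambda>r t. - \<phi> r t" "\<lambda>r t. - fx (r,t)" "\<lambda>r t. - fxx (r,t)" "\<lambda>r t. - fy (r,t)"])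
      show "continuous_on ({0..1} \<times> {t. 0 \<le> t \<and> ereal t < T}) (\<lambda>p. - \<phi> (fst p) (snd p))"
        using cont\<phi> by (auto simp: D_def intro: continuous_on_minus)
      fix r t :: real assume "0<r" "r<1" "0<t" "ereal t < T"
      note h = this
      show "((\<lambda>x. - \<phi> x t) has_real_derivative - fx (r, t)) (at r)"
        using dr[OF h] by (rule DERIV_minus)
      show "((\<lambda>x. - fx (x, t)) has_real_derivative - fxx (r, t)) (at r)"
        using drr[OF h] by (rule DERIV_minus)
      show "((\<lambda>s. - \<phi> r s) has_real_derivative - fy (r, t)) (at t)"
        using dt[OF h] by (rule DERIV_minus)
      show "- fy (r, t) + r * - fx (r, t) = - fxx (r, t) + - fx (r, t) / r - sin (2 * - \<phi> r t) / (2 * r\<^sup>2)"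
        using pde'[OF h] by (simp add: algebra_simps)
    next
      fix r :: real assume "0<r" "r<1"
      then show "- \<phi> r 0 \<le> pi" using init phi0_bd[of r] by auto
    qed (use rt bdry0 bdry1 phi0_bd[of 1] in auto)
    show "- pi < \<phi> r t \<and> \<phi> r t < pi" using up lo by simp
  qed
qed

end
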